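(* For any integer $n\ge3$, with $P_n$ the path of order $n$, $$\gamma_{(2,2,2)}(P_n)=2\gamma_t(P_n)=\begin{cases} n & \text{if } n\equiv 0\pmod 4,\\ n+1 & \text{if } n\equiv 1,3\pmod 4,\\ n+2 & \text{if } n\equiv 2\pmod 4.\end{cases}$$
   Context: $N(v)$ is the open neighbourhood. $\gamma_{(2,2,2)}(G)$ is the minimum of $\sum_v f(v)$ over functions $f:V(G)\to\{0,1,2\}$ with $\sum_{u\in N(v)}f(u)\ge2$ for every vertex $v$. $\gamma_t(G)$ is the total domination number (minimum size of $S$ such that every vertex has a neighbour in $S$). *)

theory Defs
  imports Main
begin

text \<open>A finite simple graph is given by a vertex set V and a symmetric irreflexive
adjacency relation E. Open neighbourhood of v.\<close>

definition nbhd :: "'a set \<Rightarrow> ('a \<Rightarrow> 'a \<Rightarrow> bool) \<Rightarrow> 'a \<Rightarrow> 'a set" where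
  "nbhd V E v = {u \<in> V. E v u}"

definition is_222_function :: "'a set \<Rightarrow> ('a \<Rightarrow> 'a \<Rightarrow> bool) \<Rightarrow> ('a \<Rightarrow> nat) \<Rightarrow> bool" where
  "is_222_function V E f \<longleftrightarrow>
     (\<forall>v\<in>V. f v \<in> {0,1,2}) \<and> (\<forall>v\<in>V. (\<Sum>u\<in>nbhd V E v. f u) \<ge> 2)"

definition gamma_222 :: "'a set \<Rightarrow> ('a \<Rightarrow> 'a \<Rightarrow> bool) \<Rightarrow> nat" where
  "gamma_222 V E = (LEAST w. \<exists>f. is_222_function V E f \<and> w = (\<Sum>v\<in>V. f v))"

definition is_total_dominating :: "'a set \<Rightarrow> ('a \<Rightarrow> 'a \<Rightarrow> bool) \<Rightarrow> 'a set \<Rightarrow> bool" where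
  "is_total_dominating V E S \<longleftrightarrow> S \<subseteq> V \<and> (\<forall>v\<in>V. \<exists>u\<in>S. E v u)"

definition gamma_t :: "'a set \<Rightarrow> ('a \<Rightarrow> 'a \<Rightarrow> bool) \<Rightarrow> nat" where
  "gamma_t V E = (LEAST k. \<exists>S. is_total_dominating V E S \<and> card S = k)"

definition path_V :: "nat \<Rightarrow> nat set" where
  "path_V n = {0..<n}"

definition path_E :: "nat \<Rightarrow> nat \<Rightarrow> bool" where
  "path_E i j \<longleftrightarrow> i = Suc j \<or> j = Suc i"

end

theory Submission
  imports Defs
begin

lemma nb_mid: "j + 2 < n \<Longrightarrow> nbhd (path_V n) path_E (Suc j) = {j, Suc (Suc j)}"
  by (auto simp: nbhd_def path_V_def path_E_def)

lemma nb_0: "2 \<le> n \<Longrightarrow> nbhd (path_V n) path_E 0 = {1}"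
  by (auto simp: nbhd_def path_V_def path_E_def)

lemma nb_last: "2 \<le> n \<Longrightarrow> nbhd (path_V n) path_E (n - 1) = {n - 2}"
  by (auto simp: nbhd_def path_V_def path_E_def)

lemma constraints:
  assumes "is_222_function (path_V n) path_E f" "2 \<le> n"
  shows "\<forall>j. j + 2 < n \<longrightarrow> f j + f (j+2) \<ge> 2" "f 1 \<ge> 2" "f (n - 2) \<ge> 2"
proof -
  have c: "\<And>v. v < n \<Longrightarrow> (\<Sum>u\<in>nbhd (path_V n) path_E v. f u) \<ge> 2"
    using assms(1) by (auto simp: is_222_function_def path_V_def)
  show "\<forall>j. j + 2 < n \<longrightarrow> f j + f (j+2) \<ge> 2"
  proof (intro allI impI)
    fix j assume j: "j + 2 < n"
    from c[of "Suc j"] j show "f j + f (j+2) \<ge> 2" by (simp add: nb_mid)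
  qed
  from c[of 0] assms(2) show "f 1 \<ge> 2" by (simp add: nb_0)
  have "n - 1 < n" using assms(2) by simp
  from c[OF this] show "f (n-2) \<ge> 2" using nb_last[OF assms(2)] by simp
qed

lemma blocks:
  fixes f :: "nat \<Rightarrow> nat"
  assumes "\<forall>j. j + 2 < n \<longrightarrow> f j + f (j+2) \<ge> 2"
  shows "a + 4 * m \<le> n \<Longrightarrow> sum f {a..<a + 4 * m} \<ge> 4 * m"
proof (induction m)
  case 0 then show ?case by simp
next
  case (Suc m)
  let ?b = "a + 4 * m"
  have s: "sum f {a..<a + 4 * Suc m} = sum f {a..<?b} + sum f {?b..<?b+4}"
  proof -
    have "a + 4 * Suc m = ?b + 4" by simp
    then show ?thesis by (metis le_add1 sum.atLeastLessThan_concat)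
  qed
  have blk: "sum f {b..<b+4} \<ge> 4" if "b + 4 \<le> n" for b
  proof -
    have eq: "sum f {b..<b+4} = f b + f (Suc b) + f (Suc (Suc b)) + f (Suc (Suc (Suc b)))"
      by (simp add: numeral_eq_Suc)
    have h1: "f b + f (b+2) \<ge> 2" using assms that by auto
    have h2: "f (b+1) + f (b+1+2) \<ge> 2" using assms that by auto
    have "f b + f (Suc (Suc b)) \<ge> 2" using h1 by (simp add: numeral_eq_Suc)
    moreover have "f (Suc b) + f (Suc (Suc (Suc b))) \<ge> 2" using h2 by (simp add: numeral_eq_Suc)
    ultimately show ?thesis using eq by linarith
  qed
  have "sum f {?b..<?b+4} \<ge> 4" using blk Suc.prems by simp
  with s Suc show ?case by simp
qed


definition gv :: "nat \<Rightarrow> nat" where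
  "gv n = (if n mod 4 = 0 then n else if n mod 4 = 1 \<or> n mod 4 = 3 then n + 1 else n + 2)"

lemma lower:
  fixes f :: "nat \<Rightarrow> nat"
  assumes "is_222_function (path_V n) path_E f" "3 \<le> n"
  shows "sum f {0..<n} \<ge> gv n"
proof -
  note C = constraints[OF assms(1)]
  have c: "\<forall>j. j + 2 < n \<longrightarrow> f j + f (j+2) \<ge> 2" "f 1 \<ge> 2" "f (n-2) \<ge> 2"
    using C assms(2) by auto
  note B = blocks[OF c(1)]
  have f02: "f 0 + f (0+2) \<ge> 2" 
  proof -
    have "0 + 2 < n" using assms(2) by simp
    then show ?thesis using c(1) by blast
  qed
  have h3: "sum f {0..<3} = f 0 + f 1 + f 2" by (simp add: numeral_eq_Suc)
  have head: "sum f {0..<3} \<ge> 4" using h3 f02 c(2) by (simp add: numeral_2_eq_2)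
  define k where "k = n div 4"
  have nk: "n = 4 * k + n mod 4" unfolding k_def by simp
  have "n mod 4 < 4" by simp
  then consider "n mod 4 = 0" | "n mod 4 = 1" | "n mod 4 = 2" | "n mod 4 = 3" by linarith
  then show ?thesis
  proof cases
    case 1
    then have "n = 0 + 4 * k" using nk by simp
    then show ?thesis using B[of 0 k] 1 by (simp add: gv_def)
  next
    case 4
    then have n: "n = 3 + 4 * k" using nk by simp
    have "sum f {0..<n} = sum f {0..<3} + sum f {3..<3 + 4 * k}"
      using n by (metis le_add1 zero_le sum.atLeastLessThan_concat)
    then show ?thesis using B[of 3 k] head n 4 by (simp add: gv_def)
  next
    case 2
    then have n: "n = 4 * k + 1" using nk by simp
    with assms(2) have k: "k \<ge> 1" by simp
    have e: "3 + 4 * (k - 1) = 4 * k - 1" using k by simp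
    have "sum f {0..<n} = sum f {0..<3} + sum f {3..<3 + 4 * (k-1)} + sum f {4*k-1..<4*k+1}"
      using n e k by (metis le_add1 zero_le sum.atLeastLessThan_concat add_le_mono1 diff_le_self le_add2 order.trans)
    moreover have "sum f {4*k-1..<4*k+1} = f (4*k-1) + f (4*k)"
    proof -
      have "{4*k-1..<4*k+1} = {4*k-1, 4*k}" using k by auto
      then show ?thesis using k by simp
    qed
    moreover have "f (4*k-1) \<ge> 2" using c(3) n by simp
    moreover have "sum f {3..<3 + 4 * (k-1)} \<ge> 4 * (k-1)" using B[of 3 "k-1"] e n by simp
    ultimately have "sum f {0..<n} \<ge> 4 + 4 * (k-1) + 2" using head by linarith
    then show ?thesis using n k 2 by (simp add: gv_def)
  next
    case 3
    then have n: "n = 4 * k + 2" using nk by simp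
    with assms(2) have k: "k \<ge> 1" by simp
    have e: "3 + 4 * (k - 1) = 4 * k - 1" using k by simp
    have t1: "sum f {0..<n} = sum f {0..<3} + sum f {3..<3 + 4 * (k-1)} + sum f {4*k-1..<4*k+2}"
      using n e k by (metis le_add1 zero_le sum.atLeastLessThan_concat add_le_mono1 diff_le_self le_add2 order.trans)
    have t2: "sum f {4*k-1..<4*k+2} = f (4*k-1) + f (4*k) + f (4*k+1)"
    proof -
      have "{4*k-1..<4*k+2} = {4*k-1, 4*k, 4*k+1}" using k by auto
      moreover have "4*k-1 \<noteq> 4*k" "4*k-1 \<noteq> 4*k+1" using k by arith+
      ultimately show ?thesis by (simp add: add.assoc)
    qed
    have t3: "f (4*k) \<ge> 2" using c(3) n by simp
    have t4: "f (4*k-1) + f (4*k-1+2) \<ge> 2"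
    proof -
      have "4*k-1+2 < n" using n k by simp
      then show ?thesis using c(1) by blast
    qed
    have "4*k-1+2 = 4*k+1" using k by simp
    with t4 have t5: "f (4*k-1) + f (4*k+1) \<ge> 2" by metis
    have t6: "sum f {3..<3 + 4 * (k-1)} \<ge> 4 * (k-1)" using B[of 3 "k-1"] e n by simp
    have "sum f {0..<n} \<ge> 4 + 4 * (k-1) + 4" using head t1 t2 t3 t5 t6 by linarith
    then show ?thesis using n k 3 by (simp add: gv_def)
  qed
qed


lemma tds_222:
  assumes "is_total_dominating V E T" "finite V"
  shows "is_222_function V E (\<lambda>v. if v \<in> T then 2 else 0)"
    and "(\<Sum>v\<in>V. (if v \<in> T then 2 else 0::nat)) = 2 * card T"
proof -
  have TV: "T \<subseteq> V" using assms(1) by (simp add: is_total_dominating_def)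
  show "is_222_function V E (\<lambda>v. if v \<in> T then 2 else 0)"
    unfolding is_222_function_def
  proof (intro conjI ballI)
    fix v assume v: "v \<in> V"
    then obtain u where u: "u \<in> T" "E v u" using assms(1) by (auto simp: is_total_dominating_def)
    then have un: "u \<in> nbhd V E v" using TV by (auto simp: nbhd_def)
    have fin: "finite (nbhd V E v)" using assms(2) by (simp add: nbhd_def)
    have "(\<lambda>v. if v \<in> T then 2 else 0::nat) u \<le> (\<Sum>w\<in>nbhd V E v. (if w \<in> T then 2 else 0::nat))"
      by (rule member_le_sum[OF un _ fin]) simp
    then show "(\<Sum>w\<in>nbhd V E v. (if w \<in> T then 2 else 0::nat)) \<ge> 2" using u by simp
  qed simp
  have "(\<Sum>v\<in>V. (if v \<in> T then 2 else 0::nat)) = (\<Sum>v\<in>V \<inter> T. 2)"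
    using assms(2) by (simp add: sum.If_cases Int_def)
  also have "V \<inter> T = T" using TV by blast
  finally show "(\<Sum>v\<in>V. (if v \<in> T then 2 else 0::nat)) = 2 * card T" by simp
qed

definition cnt :: "nat \<Rightarrow> nat" where
  "cnt m = card {i. i < m \<and> (i mod 4 = 1 \<or> i mod 4 = 2)}"

lemma cnt_Suc: "cnt (Suc m) = cnt m + (if m mod 4 = 1 \<or> m mod 4 = 2 then 1 else 0)"
proof (cases "m mod 4 = 1 \<or> m mod 4 = 2")
  case True
  then have "{i. i < Suc m \<and> (i mod 4 = 1 \<or> i mod 4 = 2)} = insert m {i. i < m \<and> (i mod 4 = 1 \<or> i mod 4 = 2)}"
    by auto
  then show ?thesis using True by (simp add: cnt_def)
next
  case False
  then have "{i. i < Suc m \<and> (i mod 4 = 1 \<or> i mod 4 = 2)} = {i. i < m \<and> (i mod 4 = 1 \<or> i mod 4 = 2)}"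
    using less_Suc_eq by auto
  then show ?thesis using False by (simp add: cnt_def)
qed

lemma cnt4: "cnt (4 * k) = 2 * k"
proof (induction k)
  case 0 then show ?case by (simp add: cnt_def)
next
  case (Suc k)
  have "4 * Suc k = Suc (Suc (Suc (Suc (4 * k))))" by simp
  then show ?case using Suc by (simp only: cnt_Suc) (simp add: mod_Suc)
qed

definition SS :: "nat \<Rightarrow> nat set" where
  "SS n = {i. i < n \<and> (i mod 4 = 1 \<or> i mod 4 = 2)} \<union> {n - 2}"

lemma SS_card: "3 \<le> n \<Longrightarrow> 2 * card (SS n) = gv n"
proof -
  assume n3: "3 \<le> n"
  define k where "k = n div 4"
  define A where "A = {i. i < n \<and> (i mod 4 = 1 \<or> i mod 4 = 2)}"
  have nk: "n = 4 * k + n mod 4" unfolding k_def by simp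
  have fin: "finite A" by (simp add: A_def)
  have SSA: "SS n = insert (n-2) A" by (simp add: SS_def A_def)
  have mem: "(n-2 \<in> A) = ((n-2) mod 4 = 1 \<or> (n-2) mod 4 = 2)" using n3 by (simp add: A_def)
  have cA: "card A = cnt n" by (simp add: A_def cnt_def)
  have cs: "card (SS n) = cnt n + (if (n-2) mod 4 = 1 \<or> (n-2) mod 4 = 2 then 0 else 1)"
    using fin mem cA by (simp add: SSA card_insert_if)
  have "n mod 4 < 4" by simp
  then consider "n mod 4 = 0" | "n mod 4 = 1" | "n mod 4 = 2" | "n mod 4 = 3" by linarith
  then show ?thesis
  proof cases
    case 1
    then have n: "n = 4 * k" using nk by simp
    then have "n - 2 = 4 * (k-1) + 2" using n3 by arith
    then have "(n-2) mod 4 = 2" by (simp only: mod_mult_self4) simp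
    then show ?thesis using cs n cnt4 1 by (simp add: gv_def)
  next
    case 2
    then have n: "n = Suc (4 * k)" using nk by simp
    then have "n - 2 = 4 * (k-1) + 3" using n3 by arith
    then have "(n-2) mod 4 = 3" by (simp only: mod_mult_self4) simp
    then show ?thesis using cs n cnt4 2 by (simp add: gv_def cnt_Suc mod_Suc)
  next
    case 3
    then have n: "n = Suc (Suc (4 * k))" using nk by simp
    then have "n - 2 = 4 * k" by arith
    then have "(n-2) mod 4 = 0" by simp
    then show ?thesis using cs n cnt4 3 by (simp add: gv_def cnt_Suc mod_Suc)
  next
    case 4
    then have n: "n = Suc (Suc (Suc (4 * k)))" using nk by simp
    then have "n - 2 = 4 * k + 1" by arith
    then have "(n-2) mod 4 = 1" by (simp only: mod_mult_self4) simp
    then show ?thesis using cs n cnt4 4 by (simp add: gv_def cnt_Suc mod_Suc)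
  qed
qed

lemma SS_tds: "3 \<le> n \<Longrightarrow> is_total_dominating (path_V n) path_E (SS n)"
  unfolding is_total_dominating_def
proof (intro conjI ballI)
  assume n3: "3 \<le> n"
  show "SS n \<subseteq> path_V n" using n3 by (auto simp: SS_def path_V_def)
  fix v assume "v \<in> path_V n"
  then have v: "v < n" by (simp add: path_V_def)
  show "\<exists>u\<in>SS n. path_E v u"
  proof (cases "v mod 4 = 0 \<or> v mod 4 = 1")
    case True
    show ?thesis
    proof (cases "Suc v < n")
      case True2: True
      have "(Suc v) mod 4 = 1 \<or> (Suc v) mod 4 = 2" using True by presburger
      then have "Suc v \<in> SS n" using True2 by (simp add: SS_def)
      then show ?thesis by (auto simp: path_E_def)
    next
      case False
      then have "v = Suc (n - 2)" using v n3 by arith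
      moreover have "n - 2 \<in> SS n" by (simp add: SS_def)
      ultimately show ?thesis by (auto simp: path_E_def)
    qed
  next
    case False
    then have m: "v mod 4 = 2 \<or> v mod 4 = 3" by auto
    then have v2: "v \<ge> 2" by presburger
    have "(v - 1) mod 4 = 1 \<or> (v - 1) mod 4 = 2" using m by (cases v) (auto simp: mod_Suc split: if_splits)
    then have "v - 1 \<in> SS n" using v v2 by (auto simp: SS_def)
    moreover have "path_E v (v - 1)" using v2 by (simp add: path_E_def)
    ultimately show ?thesis by blast
  qed
qed


theorem proposition22:
  fixes n :: nat
  assumes "n \<ge> 3"
  shows "gamma_222 (path_V n) path_E = 2 * gamma_t (path_V n) path_E \<and>
         gamma_222 (path_V n) path_E =
           (if n mod 4 = 0 then n
            else if n mod 4 = 1 \<or> n mod 4 = 3 then n + 1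
            else n + 2)"
proof -
  have fin: "finite (path_V n)" by (simp add: path_V_def)
  have tds: "is_total_dominating (path_V n) path_E (SS n)" using SS_tds assms by simp
  have cd: "2 * card (SS n) = gv n" using SS_card assms by simp
  have g222: "gamma_222 (path_V n) path_E = gv n"
    unfolding gamma_222_def
  proof (rule Least_equality)
    show "\<exists>f. is_222_function (path_V n) path_E f \<and> gv n = sum f (path_V n)"
      using tds_222[OF tds fin] cd by metis
  next
    fix w assume "\<exists>f. is_222_function (path_V n) path_E f \<and> w = sum f (path_V n)"
    then obtain f where f: "is_222_function (path_V n) path_E f" "w = sum f (path_V n)" by blast
    show "gv n \<le> w" using lower[OF f(1) assms] f(2) by (simp add: path_V_def)
  qed
  have gt: "gamma_t (path_V n) path_E = gv n div 2"
    unfolding gamma_t_def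
  proof (rule Least_equality)
    show "\<exists>S. is_total_dominating (path_V n) path_E S \<and> card S = gv n div 2"
      using tds cd by (intro exI[of _ "SS n"]) simp
  next
    fix k assume "\<exists>S. is_total_dominating (path_V n) path_E S \<and> card S = k"
    then obtain T where T: "is_total_dominating (path_V n) path_E T" "card T = k" by blast
    have "gv n \<le> (\<Sum>v\<in>path_V n. (if v \<in> T then 2 else 0::nat))"
      using lower[OF tds_222(1)[OF T(1) fin] assms] by (simp add: path_V_def)
    then have "gv n \<le> 2 * k" using tds_222(2)[OF T(1) fin] T(2) by simp
    then show "gv n div 2 \<le> k" by simp
  qed
  have ev: "2 * (gv n div 2) = gv n" using cd by (metis nonzero_mult_div_cancel_left zero_neq_numeral)
  have "gamma_222 (path_V n) path_E = 2 * gamma_t (path_V n) path_E" using g222 gt ev by simp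
  then show ?thesis using g222 unfolding gv_def by simp
qed

end
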